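(* Let $N\ge 1$ be an integer, let $0<\sigma_0^2<\sigma_1^2$, and let $\alpha,\beta\in(0.5,1)$. Define $\eta_0:=\Gamma^{-1}\!\left(\tfrac N2,(1-\alpha)\Gamma(\tfrac N2)\right)\sigma_0^2$ and let $\eta_1<\eta_2$ be the GLRT thresholds, i.e., the two solutions of $L_1(\eta)=\lambda_1$ for the constant $\lambda_1>1$ chosen so that $$\frac{\Gamma(\frac N2,\frac{\eta_1}{\sigma_1^2})-\Gamma(\frac N2,\frac{\eta_2}{\sigma_1^2})}{\Gamma(\frac N2)}=\beta .$$ Let $\eta_1^*:=\Gamma^{-1}\!\left(\tfrac N2,(1-\alpha)\Gamma(\tfrac N2)\right)\sigma_0^2$ and let $\eta_2^*\neq\eta_1^*$ be a solution of $\left(\frac{\eta_1^*}{\eta_2^*}\right)^{N/2}\exp\!\left(\frac{\eta_2^*-\eta_1^*}{2\sigma_1^2}\right)=1$. If $$\beta>\frac{\Gamma(\frac N2,\frac{\eta_1^*}{\sigma_1^2})}{\Gamma(\frac N2)}-\frac{\Gamma(\frac N2,\frac{\eta_2^*}{\sigma_1^2})}{\Gamma(\frac N2)},$$ then the decision regions $\mathcal{R}_0=\{Y<\eta_0\}$ and $\mathcal{R}_1=\{\eta_1<Y<\eta_2\}$ overlap, i.e., $\eta_1<\eta_0$.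
   Context: Observations $y_0,\dots,y_{N-1}$ are i.i.d. $\mathcal{N}(0,\sigma^2)$; the test statistic is $Y=\sum_{n=0}^{N-1}y_n^2$. Hypotheses: $\mathcal{H}_0:\sigma^2=\sigma_0^2$ (channel idle), $\mathcal{H}_1:\sigma^2=\sigma_1^2$ (legitimate user only), $\mathcal{H}_2:\sigma^2\in(\sigma_0^2,\sigma_1^2)\cup(\sigma_1^2,\infty)$ (illegitimate user present). $\Gamma(a)$ is the Gamma function, $\Gamma(a,x)=\int_x^\infty t^{a-1}e^{-t}dt$ the upper incomplete Gamma function, and $\Gamma^{-1}(a,\cdot)$ the inverse of $x\mapsto\Gamma(a,x)$. The GLRT likelihood ratio as a function of $Y>0$ is $L_1(Y)=\left(\frac{N\sigma_1^2}{Y}\right)^{N/2}\exp\!\left(\frac{Y}{2\sigma_1^2}-\frac N2\right)$, which decreases on $(0,N\sigma_1^2)$, increases on $(N\sigma_1^2,\infty)$ and has minimum value $1$; so for $\lambda_1>1$ the equation $L_1(\eta)=\lambda_1$ has two solutions $\eta_1<N\sigma_1^2<\eta_2$. The detection subproblem declares $\mathcal{H}_0$ on $\mathcal{R}_0=\{Y<\eta_0\}$; the recognition subproblem declares $\mathcal{H}_1$ on $\mathcal{R}_1=\{\eta_1<Y<\eta_2\}$; "overlapping" means $\mathcal{R}_0\cap\mathcal{R}_1\neq\emptyset$, i.e., $\eta_1<\eta_0$. *)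

theory Defs
  imports "HOL-Analysis.Analysis"
begin

definition upper_Gamma :: "real \<Rightarrow> real \<Rightarrow> real" where
  "upper_Gamma a x = (LBINT t:{x..}. t powr (a - 1) * exp (- t))"

text \<open>Inverse of x \<mapsto> upper_Gamma a x on the positive reals (where it is strictly decreasing).\<close>
definition upper_Gamma_inv :: "real \<Rightarrow> real \<Rightarrow> real" where
  "upper_Gamma_inv a y = (THE x. x > 0 \<and> upper_Gamma a x = y)"

definition L1 :: "nat \<Rightarrow> real \<Rightarrow> real \<Rightarrow> real" where
  "L1 N s1 Y = (real N * s1 / Y) powr (real N / 2) * exp (Y / (2 * s1) - real N / 2)"

end

theory Submission
  imports Defs
begin

lemma ug_int0:
  fixes a :: real
  assumes a: "a > 0"
  shows "set_integrable lborel {0..} (\<lambda>t. t powr (a - 1) * exp (- t))"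
    "(LBINT t:{0..}. t powr (a - 1) * exp (- t)) = Gamma a"
proof -
  have eq: "(\<lambda>t. t powr (a - 1) * exp (- t)) = (\<lambda>t. t powr (a - 1) / exp t)"
    by (simp add: exp_minus divide_inverse)
  have hi: "((\<lambda>t. t powr (a - 1) * exp (- t)) has_integral Gamma a) {0..}"
    unfolding eq by (rule Gamma_integral_real[OF a])
  have "(\<lambda>t. t powr (a - 1) * exp (- t)) absolutely_integrable_on {0..}"
    by (rule nonnegative_absolutely_integrable_1) (use hi in auto)
  hence "integrable lebesgue (\<lambda>t. indicator {0..} t *\<^sub>R (t powr (a - 1) * exp (- t)))"
    unfolding absolutely_integrable_on_def set_integrable_def by simp
  moreover have "(\<lambda>t::real. indicator {0..} t *\<^sub>R (t powr (a - 1) * exp (- t))) \<in> borel_measurable lborel"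
    by measurable
  ultimately show si: "set_integrable lborel {0..} (\<lambda>t. t powr (a - 1) * exp (- t))"
    unfolding set_integrable_def using integrable_completion by blast
  show "(LBINT t:{0..}. t powr (a - 1) * exp (- t)) = Gamma a"
    using set_borel_integral_eq_integral(2)[OF si] hi by (simp add: integral_unique)
qed

definition gf :: "real \<Rightarrow> real \<Rightarrow> real" where
  "gf a t = t powr (a - 1) * exp (- t)"

lemma ug_int:
  fixes a x :: real
  assumes a: "a > 0" and x: "x \<ge> 0"
  shows "set_integrable lborel {x..} (gf a)"
  unfolding gf_def
  by (rule set_integrable_subset[OF ug_int0(1)[OF a]]) (use x in auto)

lemma ug_split:
  fixes a x y :: real
  assumes a: "a > 0" and x: "x \<ge> 0" and xy: "x \<le> y"
  shows "upper_Gamma a x = (LBINT t:{x..<y}. gf a t) + upper_Gamma a y"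
proof -
  have i1: "set_integrable lborel {x..<y} (gf a)"
    by (rule set_integrable_subset[OF ug_int[OF a x]]) auto
  have i2: "set_integrable lborel {y..} (gf a)"
    by (rule ug_int[OF a]) (use x xy in auto)
  have e: "{x..} = {x..<y} \<union> {y..}" using xy by auto
  have d: "{x..<y} \<inter> {y..} = {}" by auto
  have "(LBINT t:{x..}. gf a t) = (LBINT t:{x..<y}. gf a t) + (LBINT t:{y..}. gf a t)"
    unfolding e by (rule set_integral_Un[OF d i1 i2])
  thus ?thesis unfolding upper_Gamma_def gf_def by simp
qed

lemma ug_mono:
  fixes a x y :: real
  assumes a: "a > 0" and x: "x \<ge> 0" and xy: "x \<le> y"
  shows "upper_Gamma a y \<le> upper_Gamma a x"
proof -
  have i1: "set_integrable lborel {x..<y} (gf a)"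
    by (rule set_integrable_subset[OF ug_int[OF a x]]) auto
  have "0 \<le> (LBINT t:{x..<y}. gf a t)"
    unfolding set_lebesgue_integral_def gf_def
    by (intro Bochner_Integration.integral_nonneg) (auto simp: indicator_def)
  thus ?thesis using ug_split[OF a x xy] by simp
qed

lemma ug_strict:
  fixes a x y :: real
  assumes a: "a > 0" and x: "x > 0" and xy: "x < y"
  shows "upper_Gamma a y < upper_Gamma a x"
proof -
  have i1: "set_integrable lborel {x..<y} (gf a)"
    by (rule set_integrable_subset[OF ug_int[OF a, of x]]) (use x in auto)
  define c where "c = min (x powr (a - 1)) (y powr (a - 1)) * exp (- y)"
  have c: "c > 0" unfolding c_def using x xy by simp
  have ic: "set_integrable lborel {x..<y} (\<lambda>_. c)"
    unfolding set_integrable_def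
    by (intro integrable_scaleR_left integrable_real_indicator) (use xy in auto)
  have le: "c \<le> gf a t" if t: "t \<in> {x..<y}" for t
  proof -
    have "min (x powr (a - 1)) (y powr (a - 1)) \<le> t powr (a - 1)"
    proof (cases "a - 1 \<ge> 0")
      case True
      have "x powr (a - 1) \<le> t powr (a - 1)" using True t x by (intro powr_mono2) auto
      then show ?thesis by linarith
    next
      case False
      have "y powr (a - 1) \<le> t powr (a - 1)" using False t x by (intro powr_mono2') auto
      then show ?thesis by linarith
    qed
    moreover have "exp (- y) \<le> exp (- t)" using t by simp
    ultimately show ?thesis unfolding c_def gf_def
      by (intro mult_mono) auto
  qed
  have "(LBINT t:{x..<y}. c) \<le> (LBINT t:{x..<y}. gf a t)"
    by (rule set_integral_mono[OF ic i1 le])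
  moreover have "(LBINT t:{x..<y}. c) = (y - x) * c"
    using xy by (subst set_integral_const) auto
  moreover have "(y - x) * c > 0" using c xy by simp
  ultimately show ?thesis using ug_split[OF a _ less_imp_le[OF xy]] x by simp
qed

lemma gf0: "gf a 0 = 0" by (simp add: gf_def)

lemma ug_lim0:
  fixes a :: real
  assumes a: "a > 0"
  shows "(\<lambda>n. upper_Gamma a (1 / Suc n)) \<longlonglongrightarrow> Gamma a"
proof -
  let ?A = "\<lambda>n::nat. {1 / real (Suc n)..}"
  have U: "(\<Union>n. ?A n) = {0<..}"
  proof (rule set_eqI, rule iffI)
    fix x :: real assume "x \<in> (\<Union>n. ?A n)"
    then obtain n where n: "1 / real (Suc n) \<le> x" by blast
    have "0 < 1 / real (Suc n)" by simp
    from this n have "0 < x" by (rule less_le_trans)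
    thus "x \<in> {0<..}" by simp
  next
    fix x :: real assume "x \<in> {0<..}"
    hence "0 < x" by simp
    then obtain n where "1 / real (Suc n) < x"
      by (metis nat_approx_posE of_nat_Suc)
    hence "x \<in> ?A n" by (simp del: of_nat_Suc)
    thus "x \<in> (\<Union>n. ?A n)" by blast
  qed
  have inc: "incseq ?A"
    unfolding incseq_def
  proof (intro allI impI)
    fix m n :: nat assume "m \<le> n"
    hence "1 / real (Suc n) \<le> 1 / real (Suc m)" by (simp add: frac_le del: of_nat_Suc)
    thus "?A m \<subseteq> ?A n" by (simp del: of_nat_Suc)
  qed
  have ind: "indicator {0<..} t *\<^sub>R gf a t = indicator {0..} t *\<^sub>R gf a t" for t :: real
    by (cases "t = 0") (auto simp: gf0 indicator_def)
  have si0: "set_integrable lborel {0..} (gf a)" using ug_int[OF a, of 0] by simp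
  have si: "set_integrable lborel {0<..} (gf a)"
    using si0 unfolding set_integrable_def ind .
  have "(\<lambda>n. LBINT t:?A n. gf a t) \<longlonglongrightarrow> (LBINT t:(\<Union>n. ?A n). gf a t)"
    by (rule set_integral_cont_up) (use inc si U in auto)
  moreover have "(LBINT t:(\<Union>n. ?A n). gf a t) = Gamma a"
    unfolding U set_lebesgue_integral_def ind
    using ug_int0(2)[OF a] unfolding set_lebesgue_integral_def gf_def .
  ultimately show ?thesis unfolding upper_Gamma_def gf_def by simp
qed

lemma ug_liminf:
  fixes a :: real
  assumes a: "a > 0"
  shows "(\<lambda>n. upper_Gamma a (real n)) \<longlonglongrightarrow> 0"
proof -
  let ?A = "\<lambda>n::nat. {real n..}"
  have I: "(\<Inter>n. ?A n) = {}"
  proof (rule set_eqI)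
    fix x :: real
    obtain n where "x < real n" using reals_Archimedean2 by blast
    hence "x \<notin> ?A n" by simp
    thus "x \<in> (\<Inter>n. ?A n) \<longleftrightarrow> x \<in> {}" by blast
  qed
  have dec: "decseq ?A" by (auto simp: decseq_def)
  have "(\<lambda>n. LBINT t:?A n. gf a t) \<longlonglongrightarrow> (LBINT t:(\<Inter>n. ?A n). gf a t)"
    by (rule set_integral_cont_down) (use dec ug_int[OF a, of 0] in auto)
  thus ?thesis unfolding I upper_Gamma_def gf_def by (simp add: set_lebesgue_integral_def)
qed

lemma ug_cont:
  fixes a x0 x1 :: real
  assumes a: "a > 0" and x0: "x0 \<ge> 0"
  shows "continuous_on {x0..x1} (upper_Gamma a)"
proof -
  have eq: "upper_Gamma a x = upper_Gamma a x0 - integral {x0..x} (gf a)" if x: "x \<in> {x0..x1}" for x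
  proof -
    have i: "set_integrable lborel {x0..x} (gf a)"
      by (rule set_integrable_subset[OF ug_int[OF a x0]]) auto
    have i1: "set_integrable lborel {x0..<x} (gf a)"
      by (rule set_integrable_subset[OF ug_int[OF a x0]]) auto
    have i2: "set_integrable lborel {x} (gf a)"
      by (rule set_integrable_subset[OF ug_int[OF a x0]]) (use x in auto)
    have e: "{x0..x} = {x0..<x} \<union> {x}" using x by auto
    have "(LBINT t:{x0..x}. gf a t) = (LBINT t:{x0..<x}. gf a t) + (LBINT t:{x}. gf a t)"
      unfolding e by (rule set_integral_Un[OF _ i1 i2]) auto
    also have "(LBINT t:{x}. gf a t) = 0"
      using set_integral_at_point[OF i2] by simp
    finally have "(LBINT t:{x0..<x}. gf a t) = integral {x0..x} (gf a)"
      using set_borel_integral_eq_integral(2)[OF i] by simp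
    thus ?thesis using ug_split[OF a x0, of x] x by simp
  qed
  have "gf a integrable_on {x0..x1}"
    by (rule set_borel_integral_eq_integral(1), rule set_integrable_subset[OF ug_int[OF a x0]]) auto
  hence "continuous_on {x0..x1} (\<lambda>x. upper_Gamma a x0 - integral {x0..x} (gf a))"
    by (intro continuous_intros indefinite_integral_continuous_1)
  thus ?thesis
  proof (rule continuous_on_eq)
    fix x assume "x \<in> {x0..x1}"
    thus "upper_Gamma a x0 - integral {x0..x} (gf a) = upper_Gamma a x" by (rule eq[symmetric])
  qed
qed

lemma ug_inv_pos:
  fixes a y :: real
  assumes a: "a > 0" and y: "0 < y" "y < Gamma a"
  shows "upper_Gamma_inv a y > 0"
proof -
  have ev: "eventually (\<lambda>n. (y < upper_Gamma a (1 / Suc n) \<and> upper_Gamma a (real n) < y) \<and> n \<ge> 1) sequentially"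
    by (intro eventually_conj order_tendstoD(1)[OF ug_lim0[OF a] y(2)]
        order_tendstoD(2)[OF ug_liminf[OF a] y(1)] eventually_ge_at_top)
  then obtain M where "\<forall>n\<ge>M. (y < upper_Gamma a (1 / Suc n) \<and> upper_Gamma a (real n) < y) \<and> n \<ge> 1"
    unfolding eventually_sequentially by blast
  then obtain n where n: "y < upper_Gamma a (1 / Suc n)" "upper_Gamma a (real n) < y" "n \<ge> 1" by blast
  define x0 :: real where "x0 = 1 / Suc n"
  define x1 :: real where "x1 = real n"
  have x0: "0 < x0" unfolding x0_def by simp
  have x01: "x0 \<le> x1"
  proof -
    have "x0 \<le> 1" unfolding x0_def by (simp del: of_nat_Suc)
    moreover have "1 \<le> x1" unfolding x1_def using n(3) by simp
    ultimately show ?thesis by linarith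
  qed
  have "\<exists>x\<ge>x0. x \<le> x1 \<and> upper_Gamma a x = y"
    by (rule IVT2') (use n x01 ug_cont[OF a, of x0 x1] x0 in \<open>auto simp: x0_def x1_def\<close>)
  then obtain x where x: "x0 \<le> x" "upper_Gamma a x = y" by blast
  have ex: "\<exists>!x. x > 0 \<and> upper_Gamma a x = y"
  proof (rule ex1I[of _ x])
    show "x > 0 \<and> upper_Gamma a x = y" using x x0 by simp
  next
    fix z assume z: "z > 0 \<and> upper_Gamma a z = y"
    show "z = x"
    proof (rule ccontr)
      assume "z \<noteq> x"
      hence "z < x \<or> x < z" by linarith
      moreover have "x > 0" using x x0 by simp
      moreover have "\<not> z < x" using ug_strict[OF a, of z x] z x by auto
      moreover have "\<not> x < z" using ug_strict[OF a, of x z] z x \<open>x > 0\<close> by auto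
      ultimately show False by blast
    qed
  qed
  show ?thesis unfolding upper_Gamma_inv_def using theI'[OF ex] by blast
qed

lemma aux_lt1: "(A::real) < B \<Longrightarrow> 2 * (x - y::real) = A - B \<Longrightarrow> x < y" by (simp add: algebra_simps)
lemma aux_lt2: "(B::real) < A \<Longrightarrow> 2 * (x - y::real) = A - B \<Longrightarrow> y < x" by (simp add: algebra_simps)

definition hf :: "nat \<Rightarrow> real \<Rightarrow> real \<Rightarrow> real" where
  "hf N s1 Y = Y / (2 * s1) - real N / 2 * ln Y"

lemma hf_dec:
  assumes s1: "0 < s1" and u: "0 < u" and uv: "u < v" and v: "v \<le> real N * s1"
  shows "hf N s1 v < hf N s1 u"
proof -
  have N: "real N > 0"
  proof (rule ccontr)
    assume "\<not> real N > 0" hence "N = 0" by simp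
    thus False using u uv v by simp
  qed
  have l0: "ln u - ln v < (u - v) / v" by (rule ln_diff_less) (use u uv in auto)
  have "(v - u) / v = - ((u - v) / v)" by (simp add: minus_divide_left)
  hence l: "(v - u) / v < ln v - ln u" using l0 by linarith
  have "(v - u) / (real N * s1) \<le> (v - u) / v"
    by (rule divide_left_mono) (use u uv v s1 N in auto)
  hence "(v - u) / (real N * s1) < ln v - ln u" using l by linarith
  hence "real N * ((v - u) / (real N * s1)) < real N * (ln v - ln u)"
    using N by (rule mult_strict_left_mono)
  moreover have "real N * ((v - u) / (real N * s1)) = (v - u) / s1" using N s1 by (simp add: field_simps)
  ultimately have "(v - u) / s1 < real N * (ln v - ln u)" by linarith
  moreover have "2 * (hf N s1 v - hf N s1 u) = (v - u) / s1 - real N * (ln v - ln u)"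
    unfolding hf_def using s1 by (simp add: field_simps)
  ultimately show ?thesis by (rule aux_lt1)
qed

lemma hf_inc:
  assumes s1: "0 < s1" and N: "N \<ge> 1" and u: "real N * s1 \<le> u" and uv: "u < v"
  shows "hf N s1 u < hf N s1 v"
proof -
  have Np: "real N > 0" using N by simp
  have up: "0 < u" using u Np s1 by (meson le_less_trans mult_pos_pos not_le)
  have l: "ln v - ln u < (v - u) / u" using ln_diff_less[of v u] up uv by simp
  have "(v - u) / u \<le> (v - u) / (real N * s1)"
    by (rule divide_left_mono) (use u uv s1 Np up in auto)
  hence "ln v - ln u < (v - u) / (real N * s1)" using l by linarith
  hence "real N * (ln v - ln u) < real N * ((v - u) / (real N * s1))"
    using Np by (rule mult_strict_left_mono)
  moreover have "real N * ((v - u) / (real N * s1)) = (v - u) / s1" using Np s1 by (simp add: field_simps)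
  ultimately have "real N * (ln v - ln u) < (v - u) / s1" by linarith
  moreover have "2 * (hf N s1 v - hf N s1 u) = (v - u) / s1 - real N * (ln v - ln u)"
    unfolding hf_def using s1 by (simp add: field_simps)
  ultimately show ?thesis by (rule aux_lt2)
qed

lemma hf_level:
  assumes s1: "0 < s1" and N: "N \<ge> 1" and p: "0 < p" and pq: "p < q" and h: "hf N s1 p = hf N s1 q"
  shows "p < real N * s1" "real N * s1 < q"
proof -
  show "p < real N * s1"
  proof (rule ccontr)
    assume "\<not> p < real N * s1"
    thus False using hf_inc[OF s1 N _ pq] h by simp
  qed
  show "real N * s1 < q"
  proof (rule ccontr)
    assume "\<not> real N * s1 < q"
    hence "q \<le> real N * s1" by simp
    thus False using hf_dec[OF s1 p pq, of N] h by simp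
  qed
qed

lemma L1_hf:
  assumes s1: "0 < s1" and N: "N \<ge> 1" and Y: "0 < Y"
  shows "L1 N s1 Y = exp (real N / 2 * ln (real N * s1) - real N / 2 + hf N s1 Y)"
proof -
  have pos: "real N * s1 / Y > 0" using s1 N Y by simp
  have "L1 N s1 Y = exp (real N / 2 * ln (real N * s1 / Y)) * exp (Y / (2 * s1) - real N / 2)"
  proof -
    have "real N * s1 / Y \<noteq> 0" using s1 Y N by simp
    thus ?thesis unfolding L1_def by (simp add: powr_def)
  qed
  also have "\<dots> = exp (real N / 2 * ln (real N * s1 / Y) + (Y / (2 * s1) - real N / 2))"
    by (simp add: exp_add)
  also have "real N / 2 * ln (real N * s1 / Y) + (Y / (2 * s1) - real N / 2)
     = real N / 2 * ln (real N * s1) - real N / 2 + hf N s1 Y"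
    unfolding hf_def using s1 N Y by (simp add: ln_div algebra_simps)
  finally show ?thesis .
qed


theorem theorem1:
  fixes N :: nat and s0 s1 alpha beta lam1 eta0 eta1 eta2 eta1s eta2s :: real
  assumes N: "N \<ge> 1"
    and s: "0 < s0" "s0 < s1"
    and alpha: "0.5 < alpha" "alpha < 1"
    and beta: "0.5 < beta" "beta < 1"
    and eta0: "eta0 = upper_Gamma_inv (real N / 2) ((1 - alpha) * Gamma (real N / 2)) * s0"
    and lam1: "lam1 > 1"
    and eta12: "0 < eta1" "eta1 < eta2" "L1 N s1 eta1 = lam1" "L1 N s1 eta2 = lam1"
    and betaeq: "(upper_Gamma (real N / 2) (eta1 / s1) - upper_Gamma (real N / 2) (eta2 / s1))
                / Gamma (real N / 2) = beta"
    and eta1s: "eta1s = upper_Gamma_inv (real N / 2) ((1 - alpha) * Gamma (real N / 2)) * s0"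
    and eta2s: "0 < eta2s" "eta2s \<noteq> eta1s"
       "(eta1s / eta2s) powr (real N / 2) * exp ((eta2s - eta1s) / (2 * s1)) = 1"
    and cond: "beta > upper_Gamma (real N / 2) (eta1s / s1) / Gamma (real N / 2)
                    - upper_Gamma (real N / 2) (eta2s / s1) / Gamma (real N / 2)"
  shows "eta1 < eta0"
proof -
  define a where "a = real N / 2"
  have a: "a > 0" unfolding a_def using N by simp
  have Gp: "Gamma a > 0" using a by (rule Gamma_real_pos)
  have y1: "0 < (1 - alpha) * Gamma a" using alpha Gp by simp
  have y2: "(1 - alpha) * Gamma a < Gamma a" using alpha Gp by simp
  have inv: "upper_Gamma_inv a ((1 - alpha) * Gamma a) > 0"
    by (rule ug_inv_pos[OF a y1 y2])
  have e1s: "eta1s > 0" unfolding eta1s a_def[symmetric] using inv s by simp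
  have e0: "eta0 = eta1s" using eta0 eta1s by simp
  have s1: "s1 > 0" using s by simp
  have e2: "eta2 > 0" using eta12 by simp
  have h12: "hf N s1 eta1 = hf N s1 eta2"
  proof -
    define C where "C = real N / 2 * ln (real N * s1) - real N / 2"
    have "exp (C + hf N s1 eta1) = exp (C + hf N s1 eta2)"
      using eta12(3,4) L1_hf[OF s1 N eta12(1)] L1_hf[OF s1 N e2] unfolding C_def by simp
    thus ?thesis by simp
  qed
  have h12s: "hf N s1 eta1s = hf N s1 eta2s"
  proof -
    have "(eta1s / eta2s) powr (real N / 2) = exp (real N / 2 * (ln eta1s - ln eta2s))"
      using e1s eta2s(1) by (simp add: powr_def ln_div)
    hence "exp (real N / 2 * (ln eta1s - ln eta2s) + (eta2s - eta1s) / (2 * s1)) = 1"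
      using eta2s(3) by (simp add: exp_add)
    hence z: "real N / 2 * (ln eta1s - ln eta2s) + (eta2s - eta1s) / (2 * s1) = 0" by simp
    have "hf N s1 eta2s - hf N s1 eta1s = real N / 2 * (ln eta1s - ln eta2s) + (eta2s - eta1s) / (2 * s1)"
      unfolding hf_def by (simp add: algebra_simps diff_divide_distrib)
    thus ?thesis using z by simp
  qed
  have l1: "eta1 < real N * s1" "real N * s1 < eta2"
    using hf_level[OF s1 N eta12(1) eta12(2) h12] by auto
  show ?thesis
  proof (rule ccontr)
    assume "\<not> eta1 < eta0"
    hence le1: "eta1s \<le> eta1" using e0 by simp
    consider "eta2s < eta1s" | "eta1s < eta2s" using eta2s(2) by linarith
    thus False
    proof cases
      case 1
      have "real N * s1 < eta1s"
        using hf_level[OF s1 N eta2s(1) 1 h12s[symmetric]] by auto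
      thus False using l1 le1 by simp
    next
      case 2
      have l2: "eta1s < real N * s1" "real N * s1 < eta2s"
        using hf_level[OF s1 N e1s 2 h12s] by auto
      have hle: "hf N s1 eta1 \<le> hf N s1 eta1s"
      proof (cases "eta1s = eta1")
        case True thus ?thesis by simp
      next
        case False
        hence "eta1s < eta1" using le1 by simp
        from hf_dec[OF s1 e1s this, of N] l1 show ?thesis by simp
      qed
      have le2: "eta2 \<le> eta2s"
      proof (rule ccontr)
        assume "\<not> eta2 \<le> eta2s"
        hence "eta2s < eta2" by simp
        from hf_inc[OF s1 N _ this] l2(2) have "hf N s1 eta2s < hf N s1 eta2" by simp
        thus False using hle h12 h12s by simp
      qed
      have m1: "upper_Gamma a (eta1 / s1) \<le> upper_Gamma a (eta1s / s1)"
        by (rule ug_mono[OF a]) (use e1s s1 le1 in \<open>auto simp: divide_right_mono\<close>)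
      have m2: "upper_Gamma a (eta2s / s1) \<le> upper_Gamma a (eta2 / s1)"
        by (rule ug_mono[OF a]) (use e2 s1 le2 in \<open>auto simp: divide_right_mono\<close>)
      have b1: "upper_Gamma a (eta1 / s1) - upper_Gamma a (eta2 / s1) = beta * Gamma a"
        using betaeq Gp unfolding a_def[symmetric] by (simp add: field_simps)
      have "(upper_Gamma a (eta1s / s1) - upper_Gamma a (eta2s / s1)) / Gamma a < beta"
        using cond unfolding a_def[symmetric] by (simp add: diff_divide_distrib)
      hence b2: "upper_Gamma a (eta1s / s1) - upper_Gamma a (eta2s / s1) < beta * Gamma a"
        using Gp by (simp add: pos_divide_less_eq)
      show False using m1 m2 b1 b2 by linarith
    qed
  qed
qed

end
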